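(* Let $Y$ be a simplicial complex with the property that each $1$-simplex is contained in a $2$-simplex. Then the natural chain map $L_\bullet(Y)\to\Delta_\bullet(Y)$ induces an isomorphism $H_1(L_\bullet(Y))\cong H_1(\Delta_\bullet(Y))$.
   Context: For a simplicial complex $Y$: $L_n(Y)$ is the free abelian group on ordered $(n+1)$-tuples $(y_0,\ldots,y_n)$ of pairwise distinct vertices such that $\{y_0,\ldots,y_n\}$ is an $n$-simplex of $Y$; $\Delta_n(Y)$ (the ordered chain complex) is the free abelian group on ordered $(n+1)$-tuples $(y_0,\ldots,y_n)$ of vertices (repetitions allowed) such that $\{y_0,\ldots,y_n\}$ is a simplex of $Y$. Both carry the differential $d(y_0,\ldots,y_n)=\sum_{i=0}^n(-1)^i(y_0,\ldots,\widehat{y_i},\ldots,y_n)$, and the chain map $L_\bullet(Y)\to\Delta_\bullet(Y)$ is the inclusion on basis elements. *)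

theory Defs
  imports "HOL-Algebra.Algebra"
begin

definition simplicial_complex :: "'a set set \<Rightarrow> bool" where
  "simplicial_complex K \<longleftrightarrow>
     (\<forall>\<sigma>\<in>K. finite \<sigma> \<and> \<sigma> \<noteq> {}) \<and> (\<forall>\<sigma>\<in>K. \<forall>\<tau>. \<tau> \<subseteq> \<sigma> \<and> \<tau> \<noteq> {} \<longrightarrow> \<tau> \<in> K)"

definition is_simplex :: "'a set set \<Rightarrow> nat \<Rightarrow> 'a set \<Rightarrow> bool" where
  "is_simplex K n \<sigma> \<longleftrightarrow> \<sigma> \<in> K \<and> card \<sigma> = n + 1"

definition L_basis :: "'a set set \<Rightarrow> nat \<Rightarrow> 'a list set" where
  "L_basis K n = {ys. length ys = n + 1 \<and> distinct ys \<and> is_simplex K n (set ys)}"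

definition D_basis :: "'a set set \<Rightarrow> nat \<Rightarrow> 'a list set" where
  "D_basis K n = {ys. length ys = n + 1 \<and> set ys \<in> K}"

definition L_chains :: "'a set set \<Rightarrow> nat \<Rightarrow> ('a list \<Rightarrow>\<^sub>0 int) monoid" where
  "L_chains K n = free_Abelian_group (L_basis K n)"

definition D_chains :: "'a set set \<Rightarrow> nat \<Rightarrow> ('a list \<Rightarrow>\<^sub>0 int) monoid" where
  "D_chains K n = free_Abelian_group (D_basis K n)"

definition delete_at :: "nat \<Rightarrow> 'a list \<Rightarrow> 'a list" where
  "delete_at i ys = take i ys @ drop (Suc i) ys"

definition bd :: "('a list \<Rightarrow>\<^sub>0 int) \<Rightarrow> ('a list \<Rightarrow>\<^sub>0 int)" where
  "bd = frag_extend (\<lambda>ys. \<Sum>i<length ys. frag_cmul ((-1) ^ i) (frag_of (delete_at i ys)))"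

definition cycles :: "(nat \<Rightarrow> ('a list \<Rightarrow>\<^sub>0 int) monoid) \<Rightarrow> nat \<Rightarrow> ('a list \<Rightarrow>\<^sub>0 int) set" where
  "cycles C n = {c \<in> carrier (C n). bd c = 0}"

definition boundaries :: "(nat \<Rightarrow> ('a list \<Rightarrow>\<^sub>0 int) monoid) \<Rightarrow> nat \<Rightarrow> ('a list \<Rightarrow>\<^sub>0 int) set" where
  "boundaries C n = bd ` carrier (C (Suc n))"

definition homology :: "(nat \<Rightarrow> ('a list \<Rightarrow>\<^sub>0 int) monoid) \<Rightarrow> nat \<Rightarrow> ('a list \<Rightarrow>\<^sub>0 int) set monoid" where
  "homology C n = subgroup_generated (C n) (cycles C n) Mod boundaries C n"

end

theory Submission
  imports Defs
begin
lemma bd_add: "bd (x + y) = bd x + bd y" by (simp add: bd_def frag_extend_add)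
lemma bd_diff: "bd (x - y) = bd x - bd y" by (simp add: bd_def frag_extend_diff)
lemma bd_minus: "bd (- x) = - bd x" by (simp add: bd_def frag_extend_minus)
lemma bd_zero[simp]: "bd 0 = 0" by (simp add: bd_def)
lemma bd2: "bd (frag_of [a,b]) = frag_of [b] - frag_of [a]"
  by (simp add: bd_def delete_at_def numeral_2_eq_2 lessThan_Suc)
lemma bd3: "bd (frag_of [a,b,c]) = frag_of [b,c] - frag_of [a,c] + frag_of [a,b]"
  by (simp add: bd_def delete_at_def numeral_3_eq_3 lessThan_Suc)
lemma DB1: "ys \<in> D_basis K 1 \<Longrightarrow> \<exists>a b. ys=[a,b] \<and> {a,b} \<in> K"
  by (auto simp: D_basis_def length_Suc_conv)
lemma DB2: "ys \<in> D_basis K 2 \<Longrightarrow> \<exists>a b c. ys=[a,b,c] \<and> {a,b,c} \<in> K"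
  by (auto simp: D_basis_def length_Suc_conv numeral_2_eq_2)
lemma LB1: "[a,b] \<in> L_basis K 1 \<longleftrightarrow> a \<noteq> b \<and> {a,b} \<in> K"
  by (auto simp: L_basis_def is_simplex_def)
lemma LB2: "[a,b,c] \<in> L_basis K 2 \<longleftrightarrow> distinct [a,b,c] \<and> {a,b,c} \<in> K"
  by (auto simp: L_basis_def is_simplex_def)
lemma DB1': "[a,b] \<in> D_basis K 1 \<longleftrightarrow> {a,b} \<in> K"
  by (auto simp: D_basis_def)
lemma DB1'': "[a,b] \<in> D_basis K (Suc 0) \<longleftrightarrow> {a,b} \<in> K"
  by (auto simp: D_basis_def)
lemma LB1': "[a,b] \<in> L_basis K (Suc 0) \<longleftrightarrow> a \<noteq> b \<and> {a,b} \<in> K"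
  by (auto simp: L_basis_def is_simplex_def)
lemma DB2': "[a,b,c] \<in> D_basis K 2 \<longleftrightarrow> {a,b,c} \<in> K"
  by (auto simp: D_basis_def)
lemma LB_DB: "L_basis K n \<subseteq> D_basis K n"
  by (auto simp: L_basis_def D_basis_def is_simplex_def)

lemma keys_bd: "Poly_Mapping.keys (bd c) \<subseteq> (\<Union>x \<in> Poly_Mapping.keys c. Poly_Mapping.keys (bd (frag_of x)))"
  by (simp add: bd_def keys_frag_extend)

lemma bd_carrier:
  assumes "\<And>ys. ys \<in> S \<Longrightarrow> Poly_Mapping.keys (bd (frag_of ys)) \<subseteq> T"
    and "Poly_Mapping.keys c \<subseteq> S"
  shows "Poly_Mapping.keys (bd c) \<subseteq> T"
  using keys_bd[of c] assms by blast

lemma image_subgroup: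
  assumes "\<And>ys. ys \<in> S \<Longrightarrow> Poly_Mapping.keys (bd (frag_of ys)) \<subseteq> T"
  shows "subgroup (bd ` carrier (free_Abelian_group S)) (free_Abelian_group T)"
proof (rule group.subgroupI[OF group_free_Abelian_group])
  show "bd ` carrier (free_Abelian_group S) \<subseteq> carrier (free_Abelian_group T)"
    using bd_carrier[OF assms] by auto
  show "bd ` carrier (free_Abelian_group S) \<noteq> {}"
    by (metis bd_zero carrier_free_Abelian_group_iff empty_iff empty_subsetI image_eqI keys_zero)
next
  fix a assume "a \<in> bd ` carrier (free_Abelian_group S)"
  then obtain c where c: "Poly_Mapping.keys c \<subseteq> S" "a = bd c" by auto
  have "inv\<^bsub>free_Abelian_group T\<^esub> a = bd (- c)"
    using c bd_carrier[OF assms c(1)] by (simp add: bd_minus)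
  then show "inv\<^bsub>free_Abelian_group T\<^esub> a \<in> bd ` carrier (free_Abelian_group S)"
    using c by (auto simp: keys_minus)
next
  fix a b assume "a \<in> bd ` carrier (free_Abelian_group S)" "b \<in> bd ` carrier (free_Abelian_group S)"
  then obtain c d where c: "Poly_Mapping.keys c \<subseteq> S" "a = bd c" "Poly_Mapping.keys d \<subseteq> S" "b = bd d" by auto
  then have "a \<otimes>\<^bsub>free_Abelian_group T\<^esub> b = bd (c + d)" by (simp add: bd_add)
  moreover have "Poly_Mapping.keys (c + d) \<subseteq> S" using c keys_add[of c d] by auto
  ultimately show "a \<otimes>\<^bsub>free_Abelian_group T\<^esub> b \<in> bd ` carrier (free_Abelian_group S)" by auto
qed

lemma cycles_subgroup:
  assumes "C n = free_Abelian_group S"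
  shows "subgroup (cycles C n) (C n)"
  unfolding assms cycles_def
proof (rule group.subgroupI[OF group_free_Abelian_group])
  show "{c \<in> carrier (free_Abelian_group S). bd c = 0} \<noteq> {}"
  proof -
    have "0 \<in> {c \<in> carrier (free_Abelian_group S). bd c = 0}" by simp
    then show ?thesis by blast
  qed
next
  fix a assume "a \<in> {c \<in> carrier (free_Abelian_group S). bd c = 0}"
  then show "inv\<^bsub>free_Abelian_group S\<^esub> a \<in> {c \<in> carrier (free_Abelian_group S). bd c = 0}"
    by (simp add: bd_minus keys_minus)
next
  fix a b assume "a \<in> {c \<in> carrier (free_Abelian_group S). bd c = 0}" "b \<in> {c \<in> carrier (free_Abelian_group S). bd c = 0}"
  then show "a \<otimes>\<^bsub>free_Abelian_group S\<^esub> b \<in> {c \<in> carrier (free_Abelian_group S). bd c = 0}"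
    using keys_add[of a b] by (auto simp: bd_add)
qed auto

lemma sc_face: "simplicial_complex K \<Longrightarrow> \<sigma> \<in> K \<Longrightarrow> \<tau> \<subseteq> \<sigma> \<Longrightarrow> \<tau> \<noteq> {} \<Longrightarrow> \<tau> \<in> K"
  unfolding simplicial_complex_def by blast

lemma keys3: "Poly_Mapping.keys (frag_of x - frag_of y + frag_of z) \<subseteq> {x,y,z}"
  using keys_add[of "frag_of x - frag_of y" "frag_of z"] keys_diff[of "frag_of x" "frag_of y"]
  by (auto simp: keys_frag_of)

lemma D_bd_keys:
  assumes "simplicial_complex K" "ys \<in> D_basis K 2"
  shows "Poly_Mapping.keys (bd (frag_of ys)) \<subseteq> D_basis K 1"
proof -
  obtain a b c where ys: "ys = [a,b,c]" "{a,b,c} \<in> K" using DB2[OF assms(2)] by blast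
  have "{b,c} \<in> K" "{a,c} \<in> K" "{a,b} \<in> K" using sc_face[OF assms(1) ys(2)] by auto
  then show ?thesis unfolding ys bd3 using keys3[of "[b,c]" "[a,c]" "[a,b]"] by (auto simp: DB1'')
qed

lemma L_bd_keys:
  assumes "simplicial_complex K" "ys \<in> L_basis K 2"
  shows "Poly_Mapping.keys (bd (frag_of ys)) \<subseteq> L_basis K 1"
proof -
  obtain a b c where ys: "ys = [a,b,c]" using LB_DB DB2 assms(2) by blast
  with assms have d: "distinct [a,b,c]" "{a,b,c} \<in> K" by (auto simp: LB2)
  have "{b,c} \<in> K" "{a,c} \<in> K" "{a,b} \<in> K" using sc_face[OF assms(1) d(2)] by auto
  then have "[b,c] \<in> L_basis K 1" "[a,c] \<in> L_basis K 1" "[a,b] \<in> L_basis K 1" using d by (auto simp: LB1')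
  then show ?thesis unfolding ys bd3 using keys3[of "[b,c]" "[a,c]" "[a,b]"] by auto
qed

lemma bdbd3: "bd (bd (frag_of [a,b,c])) = 0"
  by (simp add: bd3 bd_add bd_diff bd2)

lemma bdbd:
  assumes "Poly_Mapping.keys w \<subseteq> D_basis K 2"
  shows "bd (bd w) = 0"
  using assms
proof (induction w rule: frag_induction)
  case (one x) then show ?case using DB2 bdbd3 by metis
next
  case (diff a b) then show ?case by (simp add: bd_diff)
qed simp


lemma zero_in_bd_image: "0 \<in> bd ` carrier (free_Abelian_group S)"
  by (rule image_eqI[of _ _ 0]) simp_all

definition phi :: "('a list \<Rightarrow>\<^sub>0 int) \<Rightarrow> ('a list \<Rightarrow>\<^sub>0 int)" where
  "phi = frag_extend (\<lambda>ys. if distinct ys then frag_of ys else 0)"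

lemma phi_of: "phi (frag_of ys) = (if distinct ys then frag_of ys else 0)"
  by (simp add: phi_def)

lemma phi_diff: "phi (x - y) = phi x - phi y" by (simp add: phi_def frag_extend_diff)
lemma phi_add: "phi (x + y) = phi x + phi y" by (simp add: phi_def frag_extend_add)

lemma phi_L:
  assumes "Poly_Mapping.keys c \<subseteq> D_basis K 1"
  shows "Poly_Mapping.keys (phi c) \<subseteq> L_basis K 1"
proof -
  have "Poly_Mapping.keys (phi c) \<subseteq> (\<Union>x \<in> Poly_Mapping.keys c. Poly_Mapping.keys (if distinct x then frag_of x else 0))"
    unfolding phi_def by (rule keys_frag_extend)
  also have "\<dots> \<subseteq> L_basis K 1"
  proof (rule UN_least)
    fix x assume "x \<in> Poly_Mapping.keys c"
    then have "x \<in> D_basis K 1" using assms by blast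
    then obtain a b where "x = [a,b]" "{a,b} \<in> K" using DB1 by blast
    then show "Poly_Mapping.keys (if distinct x then frag_of x else 0) \<subseteq> L_basis K 1"
      by (auto simp: keys_frag_of LB1')
  qed
  finally show ?thesis .
qed

lemma phi_id:
  assumes "Poly_Mapping.keys z \<subseteq> L_basis K n"
  shows "phi z = z"
proof -
  have "phi z = frag_extend frag_of z"
    unfolding phi_def
    by (rule frag_extend_eq) (use assms in \<open>auto simp: L_basis_def\<close>)
  then show ?thesis by (metis frag_expansion)
qed

lemma bd_phi:
  assumes "Poly_Mapping.keys c \<subseteq> D_basis K 1"
  shows "bd (phi c) = bd c"
  using assms
proof (induction c rule: frag_induction)
  case (one x)
  then obtain a b where "x = [a,b]" using DB1 by blast
  then show ?case by (auto simp: phi_of bd2)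
next
  case (diff a b) then show ?case by (simp add: phi_diff bd_diff)
qed (simp add: phi_def)

lemma diff_phi:
  assumes "Poly_Mapping.keys c \<subseteq> D_basis K 1"
  shows "c - phi c \<in> bd ` carrier (free_Abelian_group (D_basis K 2))"
  using assms
proof (induction c rule: frag_induction)
  case zero
  show ?case using zero_in_bd_image by (simp add: phi_def)
next
  case (one x)
  then obtain a b where x: "x = [a,b]" "{a,b} \<in> K" using DB1 by blast
  show ?case
  proof (cases "a = b")
    case True
    have "frag_of x - phi (frag_of x) = bd (frag_of [a,a,a])" using True x by (simp add: phi_of bd3)
    moreover have "[a,a,a] \<in> D_basis K 2" using x True by (simp add: DB2')
    ultimately show ?thesis by (auto simp: keys_frag_of)
  next
    case False
    then have "frag_of x - phi (frag_of x) = bd 0" using x by (simp add: phi_of)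
    then show ?thesis by (metis carrier_free_Abelian_group_iff empty_subsetI image_eqI keys_zero)
  qed
next
  case (diff a b)
  then obtain u v where uv: "Poly_Mapping.keys u \<subseteq> D_basis K 2" "a - phi a = bd u"
    "Poly_Mapping.keys v \<subseteq> D_basis K 2" "b - phi b = bd v" by auto
  then have "a - b - phi (a - b) = bd (u - v)" by (simp add: phi_diff bd_diff algebra_simps)
  moreover have "Poly_Mapping.keys (u - v) \<subseteq> D_basis K 2" using uv keys_diff[of u v] by auto
  ultimately show ?case by auto
qed

lemma swap_in_BL:
  assumes sc: "simplicial_complex K"
    and hyp: "\<forall>\<sigma>. is_simplex K 1 \<sigma> \<longrightarrow> (\<exists>\<tau>. is_simplex K 2 \<tau> \<and> \<sigma> \<subseteq> \<tau>)"
    and xy: "x \<noteq> y" "{x,y} \<in> K"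
  shows "frag_of [y,x] + frag_of [x,y] \<in> bd ` carrier (free_Abelian_group (L_basis K 2))"
proof -
  have "is_simplex K 1 {x,y}" using xy by (simp add: is_simplex_def)
  then obtain \<tau> where t: "\<tau> \<in> K" "card \<tau> = 3" "{x,y} \<subseteq> \<tau>" using hyp by (auto simp: is_simplex_def)
  have "\<not> \<tau> \<subseteq> {x,y}"
  proof
    assume "\<tau> \<subseteq> {x,y}"
    then have "card \<tau> \<le> card {x,y}" by (intro card_mono) auto
    then show False using t xy by simp
  qed
  then obtain c where c: "c \<in> \<tau>" "c \<noteq> x" "c \<noteq> y" by blast
  have "{x,y,c} \<in> K" using sc_face[OF sc t(1)] t c by auto
  then have m: "[x,y,c] \<in> L_basis K 2" "[y,x,c] \<in> L_basis K 2" using xy c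
    by (auto simp: LB2 insert_commute)
  have "frag_of [y,x] + frag_of [x,y] = bd (frag_of [x,y,c] + frag_of [y,x,c])"
    by (simp add: bd_add bd3)
  moreover have "Poly_Mapping.keys (frag_of [x,y,c] + frag_of [y,x,c]) \<subseteq> L_basis K 2"
    using m keys_add[of "frag_of [x,y,c]" "frag_of [y,x,c]"] by (auto simp: keys_frag_of)
  ultimately show ?thesis by auto
qed

lemma phi_bd:
  assumes sc: "simplicial_complex K"
    and hyp: "\<forall>\<sigma>. is_simplex K 1 \<sigma> \<longrightarrow> (\<exists>\<tau>. is_simplex K 2 \<tau> \<and> \<sigma> \<subseteq> \<tau>)"
    and w: "Poly_Mapping.keys w \<subseteq> D_basis K 2"
  shows "phi (bd w) \<in> bd ` carrier (free_Abelian_group (L_basis K 2))"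
  using w
proof (induction w rule: frag_induction)
  case zero
  show ?case using zero_in_bd_image by (simp add: phi_def)
next
  case (one t)
  then obtain x y z where t: "t = [x,y,z]" "{x,y,z} \<in> K" using DB2 by blast
  have e: "phi (bd (frag_of t)) = phi (frag_of [y,z]) - phi (frag_of [x,z]) + phi (frag_of [x,y])"
    by (simp add: t bd3 phi_add phi_diff)
  have z0: "(0::'a list \<Rightarrow>\<^sub>0 int) \<in> bd ` carrier (free_Abelian_group (L_basis K 2))"
    by (metis bd_zero carrier_free_Abelian_group_iff empty_subsetI image_eqI keys_zero)
  show ?case
  proof (cases "distinct [x,y,z]")
    case True
    then have "phi (bd (frag_of t)) = bd (frag_of t)" using e by (simp add: t bd3 phi_of)
    moreover have "t \<in> L_basis K 2" using True t by (simp add: LB2)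
    ultimately show ?thesis by (auto simp: keys_frag_of)
  next
    case False
    show ?thesis
    proof (cases "x = z \<and> x \<noteq> y")
      case True
      then have "phi (bd (frag_of t)) = frag_of [y,x] + frag_of [x,y]" using True by (simp add: e phi_of)
      moreover have "{x,y} \<in> K" using t True by (simp add: insert_commute)
      ultimately show ?thesis using swap_in_BL[OF sc hyp] True by metis
    next
      case False
      with \<open>\<not> distinct [x,y,z]\<close> have "phi (bd (frag_of t)) = 0" by (auto simp: e phi_of)
      then show ?thesis using z0 by simp
    qed
  qed
next
  case (diff a b)
  then obtain u v where uv: "Poly_Mapping.keys u \<subseteq> L_basis K 2" "phi (bd a) = bd u"
    "Poly_Mapping.keys v \<subseteq> L_basis K 2" "phi (bd b) = bd v" by auto
  then have "phi (bd (a - b)) = bd (u - v)" by (simp add: phi_diff bd_diff)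
  moreover have "Poly_Mapping.keys (u - v) \<subseteq> L_basis K 2" using uv keys_diff[of u v] by auto
  ultimately show ?case by auto
qed


lemma rcos_sg: "r_coset (subgroup_generated G S) = r_coset G"
  by (simp add: r_coset_def fun_eq_iff)

lemma in_rcos_iff: "x \<in> H #>\<^bsub>free_Abelian_group S\<^esub> z \<longleftrightarrow> x - z \<in> H"
  by (auto simp: r_coset_def) (metis diff_add_cancel)

theorem lemma7p1:
  fixes K :: "'a set set"
  assumes "simplicial_complex K"
    and "\<forall>\<sigma>. is_simplex K 1 \<sigma> \<longrightarrow> (\<exists>\<tau>. is_simplex K 2 \<tau> \<and> \<sigma> \<subseteq> \<tau>)"
  shows "\<exists>f. f \<in> iso (homology (L_chains K) 1) (homology (D_chains K) 1) \<and>
             (\<forall>z \<in> cycles (L_chains K) 1.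
                f (boundaries (L_chains K) 1 #>\<^bsub>L_chains K 1\<^esub> z)
                  = boundaries (D_chains K) 1 #>\<^bsub>D_chains K 1\<^esub> z)"
proof -
  let ?L = "L_chains K" and ?D = "D_chains K"
  define ZL where "ZL = cycles ?L 1"
  define ZD where "ZD = cycles ?D 1"
  define BL where "BL = boundaries ?L 1"
  define BD where "BD = boundaries ?D 1"
  have L1: "?L n = free_Abelian_group (L_basis K n)" for n by (simp add: L_chains_def)
  have D1: "?D n = free_Abelian_group (D_basis K n)" for n by (simp add: D_chains_def)
  have BL_eq: "BL = bd ` carrier (free_Abelian_group (L_basis K 2))"
    by (simp add: BL_def boundaries_def L_chains_def numeral_2_eq_2)
  have BD_eq: "BD = bd ` carrier (free_Abelian_group (D_basis K 2))"
    by (simp add: BD_def boundaries_def D_chains_def numeral_2_eq_2)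
  have ZL_eq: "ZL = {c. Poly_Mapping.keys c \<subseteq> L_basis K 1 \<and> bd c = 0}"
    by (simp add: ZL_def cycles_def L_chains_def)
  have ZD_eq: "ZD = {c. Poly_Mapping.keys c \<subseteq> D_basis K 1 \<and> bd c = 0}"
    by (simp add: ZD_def cycles_def D_chains_def)
  have grpD: "group (?D 1)" and grpL: "group (?L 1)" by (simp_all add: L1 D1)
  have sZD: "subgroup ZD (?D 1)" unfolding ZD_def by (rule cycles_subgroup[OF D1])
  have sZL: "subgroup ZL (?L 1)" unfolding ZL_def by (rule cycles_subgroup[OF L1])
  have sBD: "subgroup BD (?D 1)" unfolding BD_eq D1
    by (rule image_subgroup) (use D_bd_keys[OF assms(1)] in auto)
  have sBL: "subgroup BL (?L 1)" unfolding BL_eq L1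
    by (rule image_subgroup) (use L_bd_keys[OF assms(1)] in auto)
  have BDZD: "BD \<subseteq> ZD"
  proof
    fix x assume "x \<in> BD"
    then obtain w where w: "Poly_Mapping.keys w \<subseteq> D_basis K 2" "x = bd w" using BD_eq by auto
    have "x \<in> carrier (?D 1)" using sBD \<open>x \<in> BD\<close> subgroup.subset by blast
    then show "x \<in> ZD" using bdbd[OF w(1)] w(2) by (simp add: ZD_eq D1)
  qed
  have BLBD: "BL \<subseteq> BD" unfolding BL_eq BD_eq using LB_DB by fastforce
  have ZLZD: "ZL \<subseteq> ZD" unfolding ZL_eq ZD_eq using LB_DB by fastforce
  have BLZL: "BL \<subseteq> ZL"
  proof
    fix x assume "x \<in> BL"
    then have "x \<in> carrier (?L 1)" using sBL subgroup.subset by blast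
    moreover have "x \<in> ZD" using \<open>x \<in> BL\<close> BLBD BDZD by blast
    ultimately show "x \<in> ZL" by (simp add: ZL_eq ZD_eq L1)
  qed
  define SD where "SD = subgroup_generated (?D 1) ZD"
  define G where "G = subgroup_generated (?L 1) ZL"
  have cSD: "carrier SD = ZD" unfolding SD_def by (rule subgroup.carrier_subgroup_generated_subgroup[OF sZD])
  have cG: "carrier G = ZL" unfolding G_def by (rule subgroup.carrier_subgroup_generated_subgroup[OF sZL])
  have grpG: "group G" unfolding G_def using grpL by (simp add: group.group_subgroup_generated)
  have sBD': "subgroup BD SD" unfolding SD_def
    by (rule group.subgroup_of_subgroup_generated[OF grpD BDZD sBD])
  have commSD: "comm_group SD" unfolding SD_def
    by (rule group.abelian_subgroup_generated[OF grpD]) (simp add: D1 abelian_free_Abelian_group)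
  have nBD: "BD \<lhd> SD" by (rule comm_group.subgroup_imp_normal[OF commSD sBD'])
  define H where "H = SD Mod BD"
  have grpH: "group H" unfolding H_def by (rule normal.factorgroup_is_group[OF nBD])
  have homD: "homology ?D 1 = H" by (simp add: H_def SD_def homology_def ZD_def BD_def)
  have homL: "homology ?L 1 = G Mod BL" by (simp add: G_def homology_def ZL_def BL_def)
  define h where "h z = BD #>\<^bsub>?D 1\<^esub> z" for z
  have rcSD: "BD #>\<^bsub>SD\<^esub> z = h z" for z by (simp add: SD_def rcos_sg h_def)
  have cH: "carrier H = {h z |z. z \<in> ZD}"
    by (auto simp: H_def FactGroup_def RCOSETS_def cSD rcSD)
  have hhom: "h \<in> hom G H"
  proof (rule homI)
    fix x assume "x \<in> carrier G"
    then show "h x \<in> carrier H" using cG cH ZLZD by auto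
  next
    fix x y assume xy: "x \<in> carrier G" "y \<in> carrier G"
    then have xy': "x \<in> carrier SD" "y \<in> carrier SD" using cG cSD ZLZD by auto
    have "h x \<otimes>\<^bsub>H\<^esub> h y = (BD #>\<^bsub>SD\<^esub> x) <#>\<^bsub>SD\<^esub> (BD #>\<^bsub>SD\<^esub> y)"
      by (simp add: H_def FactGroup_def rcSD)
    also have "\<dots> = BD #>\<^bsub>SD\<^esub> (x \<otimes>\<^bsub>SD\<^esub> y)" by (rule normal.rcos_sum[OF nBD xy'])
    also have "\<dots> = h (x \<otimes>\<^bsub>SD\<^esub> y)" by (rule rcSD)
    also have "\<dots> = h (x \<otimes>\<^bsub>G\<^esub> y)" by (simp add: SD_def G_def L1 D1)
    finally show "h (x \<otimes>\<^bsub>G\<^esub> y) = h x \<otimes>\<^bsub>H\<^esub> h y" by simp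
  qed
  have gh: "group_hom G H h"
    unfolding group_hom_def group_hom_axioms_def using grpG grpH hhom by blast
  have hrep: "h (b + z) = h z" if "b \<in> BD" "z \<in> carrier (?D 1)" for b z
  proof -
    have "b + z \<in> BD #>\<^bsub>?D 1\<^esub> z" using that by (simp add: D1 in_rcos_iff)
    then show ?thesis unfolding h_def
      by (rule group.repr_independence[OF grpD _ that(2) sBD, symmetric])
  qed
  have surj: "h ` carrier G = carrier H"
  proof
    show "h ` carrier G \<subseteq> carrier H" using hhom by (auto simp: hom_def)
  next
    show "carrier H \<subseteq> h ` carrier G"
    proof
      fix Y assume "Y \<in> carrier H"
      then obtain w where w: "w \<in> ZD" "Y = h w" using cH by auto
      have wk: "Poly_Mapping.keys w \<subseteq> D_basis K 1" "bd w = 0" using w ZD_eq by auto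
      have zZL: "phi w \<in> ZL" using phi_L[OF wk(1)] bd_phi[OF wk(1)] wk(2) by (simp add: ZL_eq)
      have "w - phi w \<in> BD" using diff_phi[OF wk(1)] BD_eq by simp
      moreover have "phi w \<in> carrier (?D 1)" using zZL ZLZD ZD_eq D1 by auto
      ultimately have "h (w - phi w + phi w) = h (phi w)" by (rule hrep)
      then have "Y = h (phi w)" using w by simp
      then show "Y \<in> h ` carrier G" using zZL cG by auto
    qed
  qed
  have hBD: "h z = BD \<longleftrightarrow> z \<in> BD" if "z \<in> carrier (?D 1)" for z
  proof
    assume "h z = BD"
    moreover have "z \<in> BD #>\<^bsub>?D 1\<^esub> z" by (rule group.rcos_self[OF grpD that sBD])
    ultimately show "z \<in> BD" by (simp add: h_def)
  next
    assume "z \<in> BD"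
    then show "h z = BD" unfolding h_def by (rule subgroup.rcos_const[OF sBD grpD])
  qed
  have ker: "kernel G H h = BL"
  proof
    show "kernel G H h \<subseteq> BL"
    proof
      fix z assume "z \<in> kernel G H h"
      then have z: "z \<in> ZL" "h z = BD" by (auto simp: kernel_def cG H_def FactGroup_def)
      then have "z \<in> carrier (?D 1)" using ZLZD ZD_eq D1 by auto
      then have "z \<in> BD" using z hBD by blast
      then obtain w where w: "Poly_Mapping.keys w \<subseteq> D_basis K 2" "z = bd w" using BD_eq by auto
      have "phi z = z" using z(1) ZL_eq phi_id by blast
      then have "z = phi (bd w)" using w by simp
      then show "z \<in> BL" using phi_bd[OF assms w(1)] BL_eq by simp
    qed
  next
    show "BL \<subseteq> kernel G H h"
    proof
      fix z assume z: "z \<in> BL"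
      then have "z \<in> carrier (?D 1)" using BLZL ZLZD ZD_eq D1 by auto
      then have "h z = BD" using hBD z BLBD by blast
      then show "z \<in> kernel G H h" using z BLZL by (auto simp: kernel_def cG H_def FactGroup_def)
    qed
  qed
  have iso: "(\<lambda>A. the_elem (h ` A)) \<in> iso (G Mod BL) H"
    using group_hom.FactGroup_iso_set[OF gh surj] ker by simp
  have val: "the_elem (h ` (BL #>\<^bsub>?L 1\<^esub> z)) = h z" if "z \<in> ZL" for z
  proof -
    have zc: "z \<in> carrier (?D 1)" using that ZLZD ZD_eq D1 by auto
    have "h ` (BL #>\<^bsub>?L 1\<^esub> z) = {h z}"
    proof
      show "h ` (BL #>\<^bsub>?L 1\<^esub> z) \<subseteq> {h z}"
        using hrep[OF _ zc] BLBD by (auto simp: r_coset_def L1)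
      have "0 \<in> BL" using BL_eq zero_in_bd_image by simp
      then show "{h z} \<subseteq> h ` (BL #>\<^bsub>?L 1\<^esub> z)" by (force simp: r_coset_def L1)
    qed
    then show ?thesis by simp
  qed
  show ?thesis
    using iso val homD homL unfolding h_def BL_def BD_def ZL_def by auto
qed

end
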